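(* Let $(\mathbf k((G)),l)$ be a series field with prelogarithmic section, $\psi$ a morphism from $(\mathbf k((G)),l)$ to itself and $H$ a subgroup of $G$ such that $(\mathrm{Comp}_H)$: $\psi(h)=l(h)$ for every $h\in H$ with $l(h)\in G$. Then for every $h\in H$ with $l(h)\in G$ and every $k\in\mathbf k$: (1) $\psi^{EL}(\mathrm{Exp}(k\cdot h))=\mathrm{Exp}(k\cdot\mathrm{Log}(h))$; (2) if $\psi^{EL}$ is surjective, then $(\psi^{EL})^{-1}(\mathrm{Exp}(k\cdot\mathrm{Log}(h)))\in H\cdot\mathrm{Exp}\,\mathbf k((H^{>1}))$.
   Context: Let $\mathbf k$ be an ordered field with an order-preserving group isomorphism $\log:(\mathbf k^{>0},\cdot)\to(\mathbf k,+)$, and $(G,\cdot,<)$ a totally ordered abelian group (written multiplicatively). $\mathbf k((G))$ denotes the field of generalized power series $\alpha=\sum_{g\in G}\alpha(g)\,g$ ($\alpha(g)\in\mathbf k$) with anti-well-ordered support, usual operations, canonical valuation $v(\alpha)=\max\operatorname{supp}\alpha$ and ordering $\alpha>0$ iff $\alpha(v(\alpha))>0$; $\mathbf k$, $G$ are identified with subsets of $\mathbf k((G))$ (so "$l(h)\in G$" means $l(h)$ is a monomial with coefficient $1$). For $S\subseteq G$, $\mathbf k((S))=\{\alpha:\operatorname{supp}\alpha\subseteq S\}$; $H^{>1}=\{h\in H:h>1\}$. A prelogarithmic section is an order-preserving group embedding $l:(G,\cdot)\to(\mathbf k((G^{>1})),+)$. Exponential extension: $G^\#$ is the ordered abelian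 group of formal symbols $e(\alpha)$, $\alpha\in\mathbf k((G^{>1}))$, with $e(\alpha)e(\beta)=e(\alpha+\beta)$, $e(\alpha)<e(\beta)\iff\alpha<\beta$, and $e(l(g))$ identified with $g\in G$; $l^\#(e(\alpha))=\alpha$ is a prelogarithmic section of $\mathbf k((G^\#))$ extending $l$. Iterating gives $G^{\#n}$, $l^{\#n}$; the EL-series field $\mathbf k((G))^{EL}=\bigcup_n\mathbf k((G^{\#n}))$ carries the logarithm $\mathrm{Log}$ (union of the associated prelogarithms $L(g\,a(1+\varepsilon))=l(g)+\log a+\sum_{i\ge1}(-1)^{i-1}\varepsilon^i/i$), a bijection from positive elements onto the field, and $\mathrm{Exp}=\mathrm{Log}^{-1}$. An order-preserving group embedding $\psi:G\to G$, extended to $\mathbf k((G))$ by $\psi(\sum a_gg)=\sum a_g\psi(g)$, is a morphism of $(\mathbf k((G)),l)$ to itself if $\psi\circ l=l\circ\psi$ on $G$; it induces $\psi^\#=(l^\#)^{-1}\circ\psi\circ l^\#$ on $G^\#$, iterates $\psi^{\#n}$, and $\psi^{EL}=\bigcup_n\psi^{\#n}$. *)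

theory Defs
  imports Main
begin

text \<open>
The exponential-logarithmic group G^EL (the union of the tower
G = G^#0 \<subseteq> G^#1 \<subseteq> G^#2 \<subseteq> ...) is modelled as a family of subgroups
Gs n of an ordered abelian group type 'u, WRITTEN ADDITIVELY
(so the neutral element 1 of the paper is 0, products of monomials g h are
g + h, and "g > 1" becomes "g > 0").
\<close>

type_synonym ('u,'k) ser = "'u \<Rightarrow> 'k"

definition supp :: "('u,'k::zero) ser \<Rightarrow> 'u set" where
  "supp a = {x. a x \<noteq> 0}"

definition anti_wo :: "'u::linorder set \<Rightarrow> bool" where
  "anti_wo S \<longleftrightarrow> (\<forall>A. A \<subseteq> S \<and> A \<noteq> {} \<longrightarrow> (\<exists>m\<in>A. \<forall>a\<in>A. a \<le> m))"

definition Ser :: "'u::linorder set \<Rightarrow> ('u,'k::zero) ser set" where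
  "Ser S = {a. supp a \<subseteq> S \<and> anti_wo (supp a)}"

definition pos_part :: "'u::linordered_ab_group_add set \<Rightarrow> 'u set" where
  "pos_part S = {g\<in>S. 0 < g}"

definition smon :: "'u \<Rightarrow> ('u,'k::{zero,one}) ser" where
  "smon g = (\<lambda>x. if x = g then 1 else 0)"

definition sadd :: "('u,'k::plus) ser \<Rightarrow> ('u,'k) ser \<Rightarrow> ('u,'k) ser" where
  "sadd a b = (\<lambda>x. a x + b x)"

definition sdiff :: "('u,'k::minus) ser \<Rightarrow> ('u,'k) ser \<Rightarrow> ('u,'k) ser" where
  "sdiff a b = (\<lambda>x. a x - b x)"

definition sscale :: "'k::times \<Rightarrow> ('u,'k) ser \<Rightarrow> ('u,'k) ser" where
  "sscale c a = (\<lambda>x. c * a x)"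

text \<open>product of series (Cauchy product; for anti-well-ordered supports the
  index set is finite)\<close>
definition smul :: "('u::ab_group_add,'k::comm_ring_1) ser \<Rightarrow> ('u,'k) ser \<Rightarrow> ('u,'k) ser" where
  "smul a b = (\<lambda>x. \<Sum>y\<in>{y. a y \<noteq> 0 \<and> b (x - y) \<noteq> 0}. a y * b (x - y))"

fun spow :: "('u::ab_group_add,'k::comm_ring_1) ser \<Rightarrow> nat \<Rightarrow> ('u,'k) ser" where
  "spow a 0 = smon 0"
| "spow a (Suc n) = smul a (spow a n)"

definition lead :: "('u::linorder,'k::zero) ser \<Rightarrow> 'u" where
  "lead a = (THE m. m \<in> supp a \<and> (\<forall>x\<in>supp a. x \<le> m))"

definition spos :: "('u::linorder,'k::linordered_field) ser \<Rightarrow> bool" where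
  "spos a \<longleftrightarrow> supp a \<noteq> {} \<and> a (lead a) > 0"

definition sless :: "('u::linorder,'k::linordered_field) ser \<Rightarrow> ('u,'k) ser \<Rightarrow> bool" where
  "sless a b \<longleftrightarrow> spos (sdiff b a)"

text \<open>extension of a map on monomials to series:
  psi(\<Sum> a_g g) = \<Sum> a_g psi(g)\<close>
definition smap :: "('u \<Rightarrow> 'u) \<Rightarrow> ('u,'k::comm_monoid_add) ser \<Rightarrow> ('u,'k) ser" where
  "smap f a = (\<lambda>y. \<Sum>x\<in>{x. a x \<noteq> 0 \<and> f x = y}. a x)"

text \<open>sum of a family of series indexed by nat (summable families:
  pointwise finite sums)\<close>
definition sfam_sum :: "(nat \<Rightarrow> ('u,'k::comm_monoid_add) ser) \<Rightarrow> ('u,'k) ser" where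
  "sfam_sum F = (\<lambda>x. \<Sum>i\<in>{i. F i x \<noteq> 0}. F i x)"

definition subgrp :: "'u::ab_group_add set \<Rightarrow> bool" where
  "subgrp S \<longleftrightarrow> 0 \<in> S \<and> (\<forall>x\<in>S. \<forall>y\<in>S. x + y \<in> S) \<and> (\<forall>x\<in>S. - x \<in> S)"

definition ser_embedding ::
  "'u::linordered_ab_group_add set \<Rightarrow> ('u \<Rightarrow> ('u,'k::linordered_field) ser) \<Rightarrow> bool" where
  "ser_embedding S L \<longleftrightarrow>
     (\<forall>x\<in>S. \<forall>y\<in>S. L (x + y) = sadd (L x) (L y)) \<and>
     (\<forall>x\<in>S. \<forall>y\<in>S. x < y \<longrightarrow> sless (L x) (L y))"

definition field_log :: "('k::linordered_field \<Rightarrow> 'k) \<Rightarrow> bool" where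
  "field_log lg \<longleftrightarrow> bij_betw lg {0<..} UNIV \<and>
     (\<forall>a>0. \<forall>b>0. lg (a * b) = lg a + lg b) \<and>
     (\<forall>a>0. \<forall>b>0. a < b \<longrightarrow> lg a < lg b)"

text \<open>The exponential tower:  Gs 0 = G with prelogarithmic section l = L on G;
  Gs (n+1) = G^{#(n+1)}, and L restricted to Gs (n+1) is l^{#(n+1)}, an order
  preserving group isomorphism of Gs (n+1) onto k((Gs n^{>1})), extending
  l^{#n} (the identification e(l^{#n}(g)) = g is the inclusion Gs n \<subseteq> Gs (n+1)).\<close>
definition EL_tower ::
  "(nat \<Rightarrow> 'u::linordered_ab_group_add set) \<Rightarrow> ('u \<Rightarrow> ('u,'k::linordered_field) ser) \<Rightarrow> bool" where
  "EL_tower Gs L \<longleftrightarrow>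
     (\<forall>n. subgrp (Gs n)) \<and>
     (\<forall>n. Gs n \<subseteq> Gs (Suc n)) \<and>
     (L ` Gs 0 \<subseteq> Ser (pos_part (Gs 0)) \<and> ser_embedding (Gs 0) L) \<and>
     (\<forall>n. bij_betw L (Gs (Suc n)) (Ser (pos_part (Gs n))) \<and> ser_embedding (Gs (Suc n)) L)"

definition ELF :: "(nat \<Rightarrow> 'u::linorder set) \<Rightarrow> ('u,'k::zero) ser set" where
  "ELF Gs = (\<Union>n. Ser (Gs n))"

text \<open>The logarithm: Log(g a (1+eps)) = L(g) + log a + \<Sum>_{i\<ge>1} (-1)^{i-1} eps^i / i,
  where g = v(alpha), a = alpha(g) and eps = a^{-1} g^{-1} alpha - 1.\<close>
definition eps_part :: "('u::linordered_ab_group_add,'k::linordered_field) ser \<Rightarrow> ('u,'k) ser" where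
  "eps_part \<alpha> = sdiff (sscale (inverse (\<alpha> (lead \<alpha>))) (smul (smon (- lead \<alpha>)) \<alpha>)) (smon 0)"

definition Log ::
  "('k::linordered_field \<Rightarrow> 'k) \<Rightarrow> ('u::linordered_ab_group_add \<Rightarrow> ('u,'k) ser) \<Rightarrow> ('u,'k) ser \<Rightarrow> ('u,'k) ser" where
  "Log lg L \<alpha> =
     sadd (sadd (L (lead \<alpha>)) (sscale (lg (\<alpha> (lead \<alpha>))) (smon 0)))
          (sfam_sum (\<lambda>i. if i = 0 then (\<lambda>_. 0)
                          else sscale ((-1) ^ (i - 1) / of_nat i) (spow (eps_part \<alpha>) i)))"

text \<open>Exp = Log^{-1}, Log being a bijection from the positive elements of the
  EL-field onto the EL-field\<close>
definition Exp ::
  "('k::linordered_field \<Rightarrow> 'k) \<Rightarrow> (nat \<Rightarrow> 'u::linordered_ab_group_add set) \<Rightarrow> ('u \<Rightarrow> ('u,'k) ser) \<Rightarrow> ('u,'k) ser \<Rightarrow> ('u,'k) ser" where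
  "Exp lg Gs L = inv_into {\<alpha>\<in>ELF Gs. spos \<alpha>} (Log lg L)"

definition morphism ::
  "'u::linordered_ab_group_add set \<Rightarrow> ('u \<Rightarrow> ('u,'k::linordered_field) ser) \<Rightarrow> ('u \<Rightarrow> 'u) \<Rightarrow> bool" where
  "morphism G L \<psi> \<longleftrightarrow>
     \<psi> ` G \<subseteq> G \<and>
     (\<forall>x\<in>G. \<forall>y\<in>G. \<psi> (x + y) = \<psi> x + \<psi> y) \<and>
     (\<forall>x\<in>G. \<forall>y\<in>G. x < y \<longrightarrow> \<psi> x < \<psi> y) \<and>
     (\<forall>g\<in>G. L (\<psi> g) = smap \<psi> (L g))"

fun psi_sharp ::
  "(nat \<Rightarrow> 'u set) \<Rightarrow> ('u \<Rightarrow> ('u,'k::comm_monoid_add) ser) \<Rightarrow> ('u \<Rightarrow> 'u) \<Rightarrow> nat \<Rightarrow> 'u \<Rightarrow> 'u" where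
  "psi_sharp Gs L \<psi> 0 = \<psi>"
| "psi_sharp Gs L \<psi> (Suc n) = (\<lambda>x. inv_into (Gs (Suc n)) L (smap (psi_sharp Gs L \<psi> n) (L x)))"

definition psi_EL_grp ::
  "(nat \<Rightarrow> 'u set) \<Rightarrow> ('u \<Rightarrow> ('u,'k::comm_monoid_add) ser) \<Rightarrow> ('u \<Rightarrow> 'u) \<Rightarrow> 'u \<Rightarrow> 'u" where
  "psi_EL_grp Gs L \<psi> x = psi_sharp Gs L \<psi> (LEAST n. x \<in> Gs n) x"

definition psi_EL ::
  "(nat \<Rightarrow> 'u set) \<Rightarrow> ('u \<Rightarrow> ('u,'k::comm_monoid_add) ser) \<Rightarrow> ('u \<Rightarrow> 'u) \<Rightarrow> ('u,'k) ser \<Rightarrow> ('u,'k) ser" where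
  "psi_EL Gs L \<psi> = smap (psi_EL_grp Gs L \<psi>)"

end

theory Submission
  imports Defs
begin


lemma lead_eq: assumes "m \<in> supp a" "\<forall>x\<in>supp a. x \<le> m" shows "lead a = m"
  unfolding lead_def by (rule the_equality) (use assms in \<open>auto intro: order.antisym\<close>)

lemma lead_prop: assumes "anti_wo (supp a)" "supp a \<noteq> {}"
  shows "lead a \<in> supp a \<and> (\<forall>x\<in>supp a. x \<le> lead a)"
proof -
  obtain m where "m \<in> supp a" "\<forall>x\<in>supp a. x \<le> m" using assms unfolding anti_wo_def by blast
  thus ?thesis using lead_eq by metis
qed

lemma supp_smon[simp]: "supp (smon g :: ('u,'k::zero_neq_one) ser) = {g}"
  by (auto simp: supp_def smon_def)

lemma lead_smon[simp]: "lead (smon g :: ('u::linorder,'k::zero_neq_one) ser) = g"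
  by (rule lead_eq) auto

lemma smon_at[simp]: "smon g g = 1" by (simp add: smon_def)

lemma anti_wo_finite: "finite (S::'u::linorder set) \<Longrightarrow> anti_wo S"
  unfolding anti_wo_def
  by (metis Max_ge Max_in finite_subset)

lemma anti_wo_subset: "anti_wo S \<Longrightarrow> T \<subseteq> S \<Longrightarrow> anti_wo T"
  unfolding anti_wo_def by blast

lemma anti_wo_Un: assumes "anti_wo (S::'u::linorder set)" "anti_wo T" shows "anti_wo (S \<union> T)"
  unfolding anti_wo_def
proof (intro allI impI)
  fix A assume A: "A \<subseteq> S \<union> T \<and> A \<noteq> {}"
  show "\<exists>m\<in>A. \<forall>a\<in>A. a \<le> m"
  proof (cases "A \<inter> S = {}")
    case True
    hence "A \<subseteq> T" using A by blast
    thus ?thesis using A assms(2) unfolding anti_wo_def by blast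
  next
    case F1: False
    have "A \<inter> S \<subseteq> S" by blast
    then obtain m1 where m1: "m1 \<in> A \<inter> S" "\<forall>a\<in>A \<inter> S. a \<le> m1" using F1 assms(1) unfolding anti_wo_def
      by blast
    show ?thesis
    proof (cases "A \<inter> T = {}")
      case True
      hence "\<forall>a\<in>A. a \<le> m1" using m1(2) A by blast
      thus ?thesis using m1(1) by blast
    next
      case False
      have "A \<inter> T \<subseteq> T" by blast
      then obtain m2 where m2: "m2 \<in> A \<inter> T" "\<forall>a\<in>A \<inter> T. a \<le> m2" using False assms(2) unfolding anti_wo_def
        by blast
      have "\<forall>a\<in>A. a \<le> max m1 m2"
      proof
        fix a assume aA: "a \<in> A"
        hence "a \<in> S \<or> a \<in> T" using A by blast
        thus "a \<le> max m1 m2"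
        proof
          assume "a \<in> S" hence "a \<le> m1" using m1(2) aA by blast
          thus ?thesis by (rule max.coboundedI1)
        next
          assume "a \<in> T" hence "a \<le> m2" using m2(2) aA by blast
          thus ?thesis by (rule max.coboundedI2)
        qed
      qed
      moreover have "max m1 m2 \<in> A" using m1(1) m2(1) by (simp add: max_def)
      ultimately show ?thesis by blast
    qed
  qed
qed

lemma anti_wo_image: assumes "strict_mono_on S f" "T \<subseteq> S" "anti_wo T" shows "anti_wo (f ` T)"
  unfolding anti_wo_def
proof (intro allI impI)
  fix A assume A: "A \<subseteq> f ` T \<and> A \<noteq> {}"
  let ?B = "{x\<in>T. f x \<in> A}"
  have "?B \<noteq> {}" using A by blast
  then obtain m where m: "m \<in> ?B" "\<forall>x\<in>?B. x \<le> m" using assms(3) unfolding anti_wo_def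
    by (metis (no_types, lifting) mem_Collect_eq subsetI)
  show "\<exists>m\<in>A. \<forall>a\<in>A. a \<le> m"
  proof (rule bexI[of _ "f m"])
    show "\<forall>a\<in>A. a \<le> f m"
    proof
      fix a assume "a \<in> A"
      then obtain x where x: "x \<in> T" "a = f x" using A by blast
      hence "x \<le> m" using m \<open>a\<in>A\<close> by auto
      thus "a \<le> f m" using x m assms(1,2) unfolding strict_mono_on_def
        by (metis (mono_tags, lifting) mem_Collect_eq order_le_less subset_iff)
    qed
  qed (use m in auto)
qed

lemma smul_nz: "smul a b z \<noteq> 0 \<Longrightarrow> \<exists>y. a y \<noteq> 0 \<and> b (z - y) \<noteq> 0"
  unfolding smul_def by (metis (mono_tags, lifting) Collect_empty_eq sum.empty)

lemma smul_smon0_right: "smul (a::('u::ab_group_add,'k::linordered_field) ser) (smon 0) = a"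
proof
  fix z
  have "{y. a y \<noteq> 0 \<and> (smon 0 :: ('u,'k) ser) (z - y) \<noteq> 0} = (if a z \<noteq> 0 then {z} else {})"
    by (auto simp: smon_def)
  thus "smul a (smon 0) z = a z" by (auto simp: smul_def smon_def)
qed

lemma smul_smon_left: "smul (smon c) (a::('u::ab_group_add,'k::linordered_field) ser) z = a (z - c)"
proof -
  have "{y. (smon c :: ('u,'k) ser) y \<noteq> 0 \<and> a (z - y) \<noteq> 0} = (if a (z - c) \<noteq> 0 then {c} else {})"
    by (auto simp: smon_def)
  thus ?thesis by (auto simp: smul_def smon_def)
qed

lemma smul_smon_smon: "smul (smon c) (smon d) = (smon (c + d) :: ('u::ab_group_add,'k::linordered_field) ser)"
proof
  fix z show "smul (smon c) (smon d) z = (smon (c + d) z :: 'k)"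
    unfolding smul_smon_left by (auto simp: smon_def algebra_simps)
qed

lemma smul_zero_left: "smul (\<lambda>_. 0) b = (\<lambda>_. 0)"
  by (rule ext) (simp add: smul_def)

lemma smap_smon: "smap f (smon x) = (smon (f x) :: ('u,'a::linordered_field) ser)"
proof
  fix y
  have "{x'. smon x x' \<noteq> (0::'a) \<and> f x' = y} = (if f x = y then {x} else {})"
    by (auto simp: smon_def)
  thus "smap f (smon x) y = (smon (f x) y :: 'a)" by (auto simp: smap_def smon_def)
qed

lemma smap_scale_smon: "smap f (sscale c (smon h)) = sscale (c::'k::field) (smon (f h))"
proof
  fix y
  have "{x'. sscale c (smon h) x' \<noteq> (0::'k) \<and> f x' = y} = (if c \<noteq> 0 \<and> f h = y then {h} else {})"
    by (auto simp: smon_def sscale_def)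
  thus "smap f (sscale c (smon h)) y = sscale c (smon (f h)) y" by (auto simp: smap_def smon_def sscale_def)
qed

lemma smap_inj_at: assumes "inj_on f S" "supp a \<subseteq> S" "x \<in> S" shows "smap f a (f x) = a x"
proof -
  have "{x'. a x' \<noteq> 0 \<and> f x' = f x} = (if a x \<noteq> 0 then {x} else {})"
    using assms unfolding supp_def inj_on_def by auto
  thus ?thesis by (auto simp: smap_def)
qed

lemma smap_out: "y \<notin> f ` supp a \<Longrightarrow> smap f a y = 0"
proof -
  assume "y \<notin> f ` supp a"
  hence e: "{x'. a x' \<noteq> 0 \<and> f x' = y} = {}" by (auto simp: supp_def)
  show ?thesis unfolding smap_def e by simp
qed

lemma smap_supp: assumes "inj_on f S" "supp a \<subseteq> S" shows "supp (smap f a) = f ` supp a"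
proof
  show "supp (smap f a) \<subseteq> f ` supp a" using smap_out by (fastforce simp: supp_def)
  show "f ` supp a \<subseteq> supp (smap f a)"
    using smap_inj_at[OF assms] assms(2) by (auto simp: supp_def)
qed

lemma smap_cong: "(\<And>x. x \<in> supp a \<Longrightarrow> f x = g x) \<Longrightarrow> smap f a = smap g a"
  unfolding smap_def supp_def by (rule ext) (rule sum.cong; auto)

lemma supp_sdiff: "supp (sdiff a b) \<subseteq> supp a \<union> supp (b::('u,'k::ab_group_add) ser)"
proof
  fix x assume "x \<in> supp (sdiff a b)"
  hence "a x - b x \<noteq> 0" by (simp add: supp_def sdiff_def)
  hence "a x \<noteq> 0 \<or> b x \<noteq> 0" by auto
  thus "x \<in> supp a \<union> supp b" by (simp add: supp_def)
qed

lemma smap_sdiff: fixes a b :: "('u,'k::ab_group_add) ser" assumes "inj_on f S" "supp a \<subseteq> S" "supp b \<subseteq> S"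
  shows "smap f (sdiff a b) = sdiff (smap f a) (smap f b)"
proof
  fix y
  have sd: "supp (sdiff a b) \<subseteq> S" using assms(2,3) supp_sdiff[of a b] by blast
  show "smap f (sdiff a b) y = sdiff (smap f a) (smap f b) y"
  proof (cases "y \<in> f ` S")
    case True
    then obtain x where "x \<in> S" "y = f x" by auto
    thus ?thesis using smap_inj_at[OF assms(1) sd] smap_inj_at[OF assms(1,2)] smap_inj_at[OF assms(1,3)]
      by (simp add: sdiff_def)
  next
    case False
    hence "y \<notin> f ` supp a" "y \<notin> f ` supp b" "y \<notin> f ` supp (sdiff a b)" using assms sd by auto
    thus ?thesis by (simp add: smap_out sdiff_def)
  qed
qed

lemma lead_smap: assumes "strict_mono_on S f" "supp a \<subseteq> S" "anti_wo (supp a)" "supp a \<noteq> {}"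
  shows "lead (smap f a) = f (lead a)" "smap f a (f (lead a)) = a (lead a)"
proof -
  have inj: "inj_on f S" using assms(1) strict_mono_on_imp_inj_on by blast
  have lp: "lead a \<in> supp a" "\<forall>x\<in>supp a. x \<le> lead a" using lead_prop[OF assms(3,4)] by auto
  show "smap f a (f (lead a)) = a (lead a)" using smap_inj_at[OF inj assms(2)] lp assms(2) by auto
  show "lead (smap f a) = f (lead a)"
  proof (rule lead_eq)
    show "f (lead a) \<in> supp (smap f a)" using smap_supp[OF inj assms(2)] lp by auto
    show "\<forall>x\<in>supp (smap f a). x \<le> f (lead a)"
      using smap_supp[OF inj assms(2)] lp assms(1,2) unfolding strict_mono_on_def
      by (smt (verit) image_iff order_le_less subset_iff)
  qed
qed

lemma spos_smap: assumes "strict_mono_on S f" "supp a \<subseteq> S" "anti_wo (supp a)" "spos a"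
  shows "spos (smap f a)"
proof -
  have ne: "supp a \<noteq> {}" using assms(4) by (simp add: spos_def)
  have inj: "inj_on f S" using assms(1) strict_mono_on_imp_inj_on by blast
  show ?thesis using lead_smap[OF assms(1-3) ne] assms(4) smap_supp[OF inj assms(2)] ne
    by (simp add: spos_def)
qed

lemma sless_smap: assumes "strict_mono_on S f" "supp a \<subseteq> S" "supp b \<subseteq> S"
  "anti_wo (supp a)" "anti_wo (supp b)" "sless a b"
  shows "sless (smap f a) (smap f b)"
proof -
  have inj: "inj_on f S" using assms(1) strict_mono_on_imp_inj_on by blast
  have sd: "supp (sdiff b a) \<subseteq> supp a \<union> supp b" using supp_sdiff[of b a] by blast
  have "anti_wo (supp (sdiff b a))" using anti_wo_subset[OF anti_wo_Un[OF assms(4,5)] sd] .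
  hence "spos (smap f (sdiff b a))"
    using spos_smap[OF assms(1) _ _] sd assms(2,3,6) unfolding sless_def by blast
  thus ?thesis using smap_sdiff[OF inj assms(3,2)] unfolding sless_def by simp
qed

lemma sless_irrefl: "\<not> sless a a"
  by (simp add: sless_def spos_def sdiff_def supp_def)

lemma sless_asym: assumes "sless a b" shows "\<not> sless b a"
proof
  assume "sless b a"
  have e: "supp (sdiff a b) = supp (sdiff b a)" by (auto simp: supp_def sdiff_def)
  have "lead (sdiff a b) = lead (sdiff b a)" unfolding lead_def e ..
  thus False using assms \<open>sless b a\<close> unfolding sless_def spos_def by (simp add: sdiff_def)
qed



lemma L_in_Ser: assumes T: "EL_tower Gs L" and x: "x \<in> Gs n"
  shows "\<exists>m. L x \<in> Ser (pos_part (Gs m))"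
proof (cases n)
  case 0 thus ?thesis using T x unfolding EL_tower_def by blast
next
  case (Suc m)
  hence "bij_betw L (Gs (Suc m)) (Ser (pos_part (Gs m)))" using T unfolding EL_tower_def by blast
  thus ?thesis using x Suc by (metis bij_betw_apply)
qed

lemma L_supp: assumes T: "EL_tower Gs L" and x: "x \<in> Gs n"
  shows "\<And>z. L x z \<noteq> 0 \<Longrightarrow> 0 < z" "anti_wo (supp (L x))"
  using L_in_Ser[OF T x] by (auto simp: Ser_def supp_def pos_part_def)

lemma emb: assumes T: "EL_tower Gs L" shows "ser_embedding (Gs n) L"
  using T unfolding EL_tower_def by (cases n) auto

lemma Gs_mono: assumes T: "EL_tower Gs L" and "k \<le> j" shows "Gs k \<subseteq> Gs j"
proof -
  have "\<And>n. Gs n \<subseteq> Gs (Suc n)" using T unfolding EL_tower_def by blast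
  thus ?thesis using assms(2) by (rule lift_Suc_mono_le)
qed

lemma Gs_sub: assumes T: "EL_tower Gs L" shows "subgrp (Gs n)"
  using T unfolding EL_tower_def by blast

lemma L_inj: assumes T: "EL_tower Gs L" shows "inj_on L (Gs n)"
proof (rule inj_onI)
  fix x y assume xy: "x \<in> Gs n" "y \<in> Gs n" "L x = L y"
  have e: "\<forall>x\<in>Gs n. \<forall>y\<in>Gs n. x < y \<longrightarrow> sless (L x) (L y)" using emb[OF T] unfolding ser_embedding_def by blast
  show "x = y"
  proof (rule ccontr)
    assume "x \<noteq> y"
    hence "x < y \<or> y < x" by auto
    thus False using e xy sless_irrefl by metis
  qed
qed

lemma L_zero: assumes T: "EL_tower Gs L" shows "L 0 = (\<lambda>_. 0)"
proof
  fix z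
  have "0 \<in> Gs 0" using Gs_sub[OF T] unfolding subgrp_def by blast
  hence "L (0 + 0) = sadd (L 0) (L 0)" using emb[OF T, of 0] unfolding ser_embedding_def by blast
  hence "L 0 z = L 0 z + L 0 z" unfolding sadd_def by (metis add_0)
  thus "L 0 z = 0" by simp
qed

lemma lg1: assumes "field_log lg" shows "lg 1 = 0"
proof -
  have h: "\<forall>a>0. \<forall>b>0. lg (a * b) = lg a + lg b" using assms unfolding field_log_def by blast
  have "lg (1*1) = lg 1 + lg 1" using h[rule_format, of 1 1] by simp
  thus ?thesis by simp
qed

lemma spow_zero: "i \<ge> 1 \<Longrightarrow> spow (\<lambda>_. 0) i = (\<lambda>_. 0)"
  by (cases i) (auto simp: smul_zero_left)

lemma spow_zero': "0 < i \<Longrightarrow> spow (\<lambda>_. 0) i x = 0"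
  by (cases i) (auto simp: smul_def)

lemma sfam_sum_zero: "(\<And>i. F i = (\<lambda>_. 0)) \<Longrightarrow> sfam_sum F z = 0"
  unfolding sfam_sum_def by simp

lemma Log_smon: fixes x :: "'u::linordered_ab_group_add"
  assumes "field_log (lg :: 'k::linordered_field \<Rightarrow> 'k)"
  shows "Log lg L (smon x) = L x"
proof -
  have e: "eps_part (smon x :: ('u,'k) ser) = (\<lambda>_. 0)"
    unfolding eps_part_def sdiff_def sscale_def smul_smon_smon by (rule ext) simp
  have "\<And>i. (if i = 0 then (\<lambda>_. 0) else sscale ((-1) ^ (i - 1) / of_nat i) (spow (eps_part (smon x :: ('u,'k) ser)) i))
       = (\<lambda>_. 0 :: 'k)"
    unfolding e by (auto simp: sscale_def spow_zero')
  hence "\<And>z. sfam_sum (\<lambda>i. if i = 0 then (\<lambda>_. 0) else sscale ((-1) ^ (i - 1) / of_nat i) (spow (eps_part (smon x :: ('u,'k) ser)) i)) z = 0"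
    by (rule sfam_sum_zero)
  thus ?thesis unfolding Log_def sadd_def sscale_def using lg1[OF assms] by (intro ext) simp
qed

lemma spow_supp:
  fixes e :: "('u::linordered_ab_group_add,'k::linordered_field) ser"
  assumes "\<And>z. e z \<noteq> 0 \<Longrightarrow> z \<le> v" "v < 0"
  shows "spow e (Suc i) z \<noteq> 0 \<Longrightarrow> z \<le> v"
proof (induction i arbitrary: z)
  case 0 thus ?case using assms(1) by (simp add: smul_smon0_right)
next
  case (Suc i)
  then obtain y where y: "e y \<noteq> 0" "spow e (Suc i) (z - y) \<noteq> 0" using smul_nz by (metis spow.simps(2))
  have "y \<le> v" "z - y \<le> v" using y assms(1) Suc.IH by auto
  hence "z \<le> v + v" by (metis add_mono diff_add_cancel add.commute)
  moreover have "v + v \<le> v" using assms(2) by simp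
  ultimately show ?case by (rule order_trans)
qed

lemma spow_v:
  fixes e :: "('u::linordered_ab_group_add,'k::linordered_field) ser"
  assumes "\<And>z. e z \<noteq> 0 \<Longrightarrow> z \<le> v" "v < 0"
  shows "spow e (Suc (Suc i)) v = 0"
proof (rule ccontr)
  assume "spow e (Suc (Suc i)) v \<noteq> 0"
  then obtain y where y: "e y \<noteq> 0" "spow e (Suc i) (v - y) \<noteq> 0" using smul_nz by (metis spow.simps(2))
  have "y \<le> v" "v - y \<le> v" using y assms(1) spow_supp[of e v, OF assms(1) assms(2)] by auto
  hence "v \<le> v + v" by (metis add_mono diff_add_cancel add.commute)
  thus False using assms(2) by simp
qed



lemma Exp_unique:
  fixes \<alpha> :: "('u::linordered_ab_group_add,'k::linordered_field) ser"
  assumes lg: "field_log lg" and T: "EL_tower Gs L" and aE: "\<alpha> \<in> ELF Gs" and sp: "spos \<alpha>"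
    and LT: "Log lg L \<alpha> = t" and tp: "\<And>z. t z \<noteq> 0 \<Longrightarrow> 0 < z"
  shows "\<alpha> = smon (lead \<alpha>) \<and> L (lead \<alpha>) = t \<and> (\<exists>n. lead \<alpha> \<in> Gs n)"
proof -
  obtain n where aS: "\<alpha> \<in> Ser (Gs n)" using aE by (auto simp: ELF_def)
  hence sa: "supp \<alpha> \<subseteq> Gs n" "anti_wo (supp \<alpha>)" by (auto simp: Ser_def)
  have ne: "supp \<alpha> \<noteq> {}" using sp by (simp add: spos_def)
  define g where "g = lead \<alpha>"
  have gp: "g \<in> supp \<alpha>" "\<forall>x\<in>supp \<alpha>. x \<le> g" using lead_prop[OF sa(2) ne] g_def by auto
  have gG: "g \<in> Gs n" using gp sa by auto
  define a where "a = \<alpha> g"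
  have apos: "a > 0" using sp by (simp add: spos_def a_def g_def)
  have Lgp: "\<And>z. L g z \<noteq> 0 \<Longrightarrow> 0 < z" using L_supp(1)[OF T gG] by blast
  define e where "e = eps_part \<alpha>"
  have eps: "\<And>z. e z = inverse a * \<alpha> (z + g) - smon 0 z"
    unfolding e_def eps_part_def sdiff_def sscale_def smul_smon_left g_def a_def by simp
  have eps_nz: "z < 0 \<and> \<alpha> (z + g) \<noteq> 0" if nz: "e z \<noteq> 0" for z
  proof (cases "\<alpha> (z+g) = 0")
    case True
    hence "e z = - smon 0 z" using eps by simp
    hence "z = 0" using nz by (auto simp: smon_def split: if_splits)
    hence "\<alpha> (z+g) = a" by (simp add: a_def)
    thus ?thesis using True apos by simp
  next
    case False
    hence "z + g \<le> g" using gp by (auto simp: supp_def)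
    hence "z \<le> 0" by simp
    moreover have "z \<noteq> 0"
    proof
      assume "z = 0"
      hence "e z = inverse a * a - 1" using eps by (simp add: a_def smon_def)
      also have "\<dots> = 0" using apos by simp
      finally show False using nz by simp
    qed
    ultimately show ?thesis using False by simp
  qed
  define F where "F = (\<lambda>i. if i = 0 then (\<lambda>_. 0) else sscale ((-1) ^ (i - 1) / of_nat i) (spow e i))"
  have Log_at: "t z = L g z + lg a * smon 0 z + sfam_sum F z" for z
  proof -
    have "t z = Log lg L \<alpha> z" using LT by simp
    thus ?thesis unfolding Log_def sadd_def sscale_def F_def e_def g_def a_def by simp
  qed
  have e0: "\<forall>z. e z = 0"
  proof (rule ccontr)
    assume "\<not> (\<forall>z. e z = 0)"
    hence sne: "supp e \<noteq> {}" by (auto simp: supp_def)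
    let ?B = "(\<lambda>z. z + g) ` supp e"
    have "?B \<subseteq> supp \<alpha>" using eps_nz by (auto simp: supp_def)
    hence "anti_wo ?B" using anti_wo_subset sa(2) by blast
    moreover have "?B \<noteq> {}" using sne by simp
    ultimately obtain m where m: "m \<in> ?B" "\<forall>x\<in>?B. x \<le> m" unfolding anti_wo_def by blast
    then obtain v where v: "v \<in> supp e" "m = v + g" by auto
    have vmax: "\<And>z. e z \<noteq> 0 \<Longrightarrow> z \<le> v" using m v by (auto simp: supp_def)
    have ev: "e v \<noteq> 0" using v by (simp add: supp_def)
    have vneg: "v < 0" using eps_nz[OF ev] by simp
    have Fv: "F i v = (if i = 1 then e v else 0)" for i
    proof (cases i)
      case 0 thus ?thesis by (simp add: F_def)
    next
      case (Suc j)
      show ?thesis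
      proof (cases j)
        case 0 thus ?thesis using Suc by (simp add: F_def sscale_def smul_smon0_right)
      next
        case (Suc k)
        thus ?thesis using \<open>i = Suc j\<close> spow_v[of e v k, OF vmax vneg] by (simp add: F_def sscale_def)
      qed
    qed
    have "{i. F i v \<noteq> 0} = {1}" using Fv ev by auto
    hence "sfam_sum F v = e v" unfolding sfam_sum_def using Fv by simp
    moreover have "t v = 0" using tp vneg by force
    moreover have "L g v = 0" using Lgp vneg by force
    moreover have "smon 0 v = (0::'k)" using vneg by (simp add: smon_def)
    ultimately have "e v = 0" using Log_at[of v] by simp
    thus False using ev by simp
  qed
  have F0: "F i = (\<lambda>_. 0)" for i
  proof -
    have "e = (\<lambda>_. 0)" using e0 by auto
    thus ?thesis unfolding F_def by (auto simp: sscale_def spow_zero')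
  qed
  have aw: "\<alpha> w = a * smon 0 (w - g)" for w
  proof -
    have "0 = inverse a * \<alpha> (w - g + g) - smon 0 (w - g)" using eps[of "w - g"] e0 by simp
    hence "smon 0 (w - g) = inverse a * \<alpha> w" by simp
    thus ?thesis using apos by (simp add: field_simps)
  qed
  have Lg0: "L g 0 = 0" using Lgp[of 0] by force
  have "t 0 = lg a" using Log_at[of 0] Lg0 sfam_sum_zero[of F, OF F0] by (simp add: smon_def)
  hence "lg a = 0" using tp[of 0] by force
  moreover have "inj_on lg {0<..}" using lg unfolding field_log_def bij_betw_def by blast
  ultimately have a1: "a = 1" using lg1[OF lg] apos unfolding inj_on_def by force
  have "\<alpha> = smon g" using aw a1 by (intro ext) (simp add: smon_def)
  moreover have "L g = t" using Log_at sfam_sum_zero[of F, OF F0] by (intro ext) (simp add: smon_def a1 lg1[OF lg])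
  ultimately show ?thesis using gG g_def by auto
qed

lemma smon_ELF: assumes "x \<in> Gs n" shows "(smon x :: ('u::linorder,'k::linordered_field) ser) \<in> ELF Gs"
  using assms anti_wo_finite[of "{x}"] unfolding ELF_def Ser_def by auto

lemma spos_smon: "spos (smon x :: ('u::linorder,'k::linordered_field) ser)"
  by (simp add: spos_def)

lemma Exp_char:
  fixes t :: "('u::linordered_ab_group_add,'k::linordered_field) ser"
  assumes lg: "field_log lg" and T: "EL_tower Gs L" and x: "x \<in> Gs n" "L x = t"
  shows "Exp lg Gs L t = smon x"
proof -
  let ?S = "{\<alpha>\<in>ELF Gs. spos \<alpha>}"
  have sx: "smon x \<in> ?S" using smon_ELF[of x Gs n, OF x(1)] spos_smon by auto
  have lx: "Log lg L (smon x) = t" using Log_smon[OF lg, of L x] x(2) by simp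
  have tp: "\<And>z. t z \<noteq> 0 \<Longrightarrow> 0 < z" using L_supp(1)[OF T x(1)] x(2) by blast
  have timg: "t \<in> Log lg L ` ?S" using sx lx by force
  define \<alpha> where "\<alpha> = Exp lg Gs L t"
  have aS: "\<alpha> \<in> ?S" unfolding \<alpha>_def Exp_def using inv_into_into[OF timg] .
  have aL: "Log lg L \<alpha> = t" unfolding \<alpha>_def Exp_def using f_inv_into_f[OF timg] .
  from Exp_unique[OF lg T _ _ aL tp] aS obtain n' where
    u: "\<alpha> = smon (lead \<alpha>)" "L (lead \<alpha>) = t" "lead \<alpha> \<in> Gs n'" by auto
  let ?m = "max n n'"
  have "x \<in> Gs ?m" "lead \<alpha> \<in> Gs ?m" using Gs_mono[OF T] x(1) u(3) by (meson max.cobounded1 max.cobounded2 subsetD)+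
  hence "lead \<alpha> = x" using L_inj[OF T, of ?m] u(2) x(2) unfolding inj_on_def by blast
  thus ?thesis using u(1) \<alpha>_def by simp
qed



lemma agree_step:
  assumes T: "EL_tower Gs L"
    and c1: "\<forall>x\<in>Gs n. psi_sharp Gs L \<psi> n x \<in> Gs n"
    and c5: "\<forall>x\<in>Gs n. L (psi_sharp Gs L \<psi> n x) = smap (psi_sharp Gs L \<psi> n) (L x)"
    and x: "x \<in> Gs n"
  shows "psi_sharp Gs L \<psi> (Suc n) x = psi_sharp Gs L \<psi> n x"
proof -
  have m: "psi_sharp Gs L \<psi> n x \<in> Gs (Suc n)" using c1 x Gs_mono[OF T, of n "Suc n"] by auto
  have e: "smap (psi_sharp Gs L \<psi> n) (L x) = L (psi_sharp Gs L \<psi> n x)" using c5 x by simp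
  show ?thesis unfolding psi_sharp.simps e by (rule inv_into_f_f[OF L_inj[OF T, of "Suc n"] m])
qed

lemma smap_in_Ser:
  assumes T: "EL_tower Gs L"
    and c1: "\<forall>x\<in>Gs m. f x \<in> Gs m" and c2: "strict_mono_on (Gs m) f" and c3: "f 0 = 0"
    and a: "(a :: ('u::linordered_ab_group_add,'k::linordered_field) ser) \<in> Ser (pos_part (Gs m))"
  shows "smap f a \<in> Ser (pos_part (Gs m))"
proof -
  have sa: "supp a \<subseteq> pos_part (Gs m)" "anti_wo (supp a)" using a by (auto simp: Ser_def)
  have sa': "supp a \<subseteq> Gs m" using sa(1) by (auto simp: pos_part_def)
  have inj: "inj_on f (Gs m)" using c2 strict_mono_on_imp_inj_on by blast
  have z0: "0 \<in> Gs m" using Gs_sub[OF T] unfolding subgrp_def by blast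
  have "f ` supp a \<subseteq> pos_part (Gs m)"
  proof
    fix y assume "y \<in> f ` supp a"
    then obtain z where z: "z \<in> supp a" "y = f z" by auto
    hence "z \<in> Gs m" "0 < z" using sa(1) by (auto simp: pos_part_def)
    hence "f 0 < f z" using c2 z0 unfolding strict_mono_on_def by blast
    thus "y \<in> pos_part (Gs m)" using z c1 \<open>z \<in> Gs m\<close> c3 by (auto simp: pos_part_def)
  qed
  moreover have "anti_wo (f ` supp a)" using anti_wo_image[OF c2 sa' sa(2)] .
  ultimately show ?thesis using smap_supp[OF inj sa'] unfolding Ser_def by auto
qed

lemma psi_level:
  fixes L :: "'u::linordered_ab_group_add \<Rightarrow> ('u,'k::linordered_field) ser"
  assumes T: "EL_tower Gs L" and M: "morphism (Gs 0) L \<psi>"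
  shows "(\<forall>x\<in>Gs n. psi_sharp Gs L \<psi> n x \<in> Gs n) \<and> strict_mono_on (Gs n) (psi_sharp Gs L \<psi> n)
    \<and> psi_sharp Gs L \<psi> n 0 = 0 \<and> (\<forall>x\<in>Gs n. L (psi_sharp Gs L \<psi> n x) = smap (psi_sharp Gs L \<psi> n) (L x))"
proof (induction n)
  case 0
  have z0: "0 \<in> Gs 0" using Gs_sub[OF T] unfolding subgrp_def by blast
  have "\<psi> (0 + 0) = \<psi> 0 + \<psi> 0" using M z0 unfolding morphism_def by blast
  hence "\<psi> 0 = 0" by simp
  thus ?case using M unfolding morphism_def strict_mono_on_def by auto
next
  case (Suc m)
  let ?f = "psi_sharp Gs L \<psi> m" and ?f' = "psi_sharp Gs L \<psi> (Suc m)"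
  have c1: "\<forall>x\<in>Gs m. ?f x \<in> Gs m" and c2: "strict_mono_on (Gs m) ?f" and c3: "?f 0 = 0"
    and c5: "\<forall>x\<in>Gs m. L (?f x) = smap ?f (L x)" using Suc.IH by auto
  have agree: "\<And>x. x \<in> Gs m \<Longrightarrow> ?f' x = ?f x" using agree_step[OF T c1 c5] by blast
  have bij: "bij_betw L (Gs (Suc m)) (Ser (pos_part (Gs m)))" using T unfolding EL_tower_def by blast
  have img: "L ` Gs (Suc m) = Ser (pos_part (Gs m))" using bij by (simp add: bij_betw_def)
  have LxS: "L x \<in> Ser (pos_part (Gs m))" if "x \<in> Gs (Suc m)" for x using img that by blast
  have sS: "smap ?f (L x) \<in> L ` Gs (Suc m)" if "x \<in> Gs (Suc m)" for x
    using smap_in_Ser[OF T c1 c2 c3 LxS[OF that]] img by simp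
  have f'def: "?f' x = inv_into (Gs (Suc m)) L (smap ?f (L x))" for x by simp
  have d1: "?f' x \<in> Gs (Suc m)" if "x \<in> Gs (Suc m)" for x
    using inv_into_into[OF sS[OF that]] f'def by simp
  have d5': "L (?f' x) = smap ?f (L x)" if "x \<in> Gs (Suc m)" for x
    using f_inv_into_f[OF sS[OF that]] f'def by simp
  have d5: "L (?f' x) = smap ?f' (L x)" if "x \<in> Gs (Suc m)" for x
  proof -
    have "supp (L x) \<subseteq> Gs m" using LxS[OF that] by (auto simp: Ser_def pos_part_def)
    hence "smap ?f (L x) = smap ?f' (L x)" using agree by (intro smap_cong) auto
    thus ?thesis using d5'[OF that] by simp
  qed
  have z0: "0 \<in> Gs m" using Gs_sub[OF T] unfolding subgrp_def by blast
  have d3: "?f' 0 = 0" using agree[OF z0] c3 by simp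
  have embS: "\<forall>x\<in>Gs (Suc m). \<forall>y\<in>Gs (Suc m). x < y \<longrightarrow> sless (L x) (L y)"
    using emb[OF T, of "Suc m"] unfolding ser_embedding_def by blast
  have d2: "strict_mono_on (Gs (Suc m)) ?f'"
  proof (rule strict_mono_onI)
    fix x y assume xy: "x \<in> Gs (Suc m)" "y \<in> Gs (Suc m)" "x < y"
    have sl: "sless (L x) (L y)" using embS xy by blast
    have sx: "supp (L x) \<subseteq> Gs m" "anti_wo (supp (L x))" using LxS[OF xy(1)] by (auto simp: Ser_def pos_part_def)
    have sy: "supp (L y) \<subseteq> Gs m" "anti_wo (supp (L y))" using LxS[OF xy(2)] by (auto simp: Ser_def pos_part_def)
    have "sless (smap ?f (L x)) (smap ?f (L y))" using sless_smap[OF c2 sx(1) sy(1) sx(2) sy(2) sl] .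
    hence sl2: "sless (L (?f' x)) (L (?f' y))" using d5' xy by simp
    show "?f' x < ?f' y"
    proof (rule ccontr)
      assume "\<not> ?f' x < ?f' y"
      hence "?f' x = ?f' y \<or> ?f' y < ?f' x" by auto
      thus False
      proof
        assume "?f' x = ?f' y" thus False using sl2 sless_irrefl by metis
      next
        assume "?f' y < ?f' x"
        hence "sless (L (?f' y)) (L (?f' x))" using embS d1 xy by blast
        thus False using sl2 sless_asym by blast
      qed
    qed
  qed
  show ?case using d1 d2 d3 d5 by blast
qed

lemma psi_agree:
  fixes L :: "'u::linordered_ab_group_add \<Rightarrow> ('u,'k::linordered_field) ser"
  assumes T: "EL_tower Gs L" and M: "morphism (Gs 0) L \<psi>" and x: "x \<in> Gs n"
  shows "psi_sharp Gs L \<psi> (Suc n) x = psi_sharp Gs L \<psi> n x"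
  using agree_step[OF T _ _ x] psi_level[OF T M, of n] by blast

lemma psi_EL_grp_eq:
  fixes L :: "'u::linordered_ab_group_add \<Rightarrow> ('u,'k::linordered_field) ser"
  assumes T: "EL_tower Gs L" and M: "morphism (Gs 0) L \<psi>" and x: "x \<in> Gs n"
  shows "psi_EL_grp Gs L \<psi> x = psi_sharp Gs L \<psi> n x"
proof -
  define k where "k = (LEAST n. x \<in> Gs n)"
  have kn: "k \<le> n" unfolding k_def using x by (rule Least_le)
  have xk: "x \<in> Gs k" unfolding k_def using x by (rule LeastI)
  have "psi_sharp Gs L \<psi> j x = psi_sharp Gs L \<psi> k x" if "k \<le> j" for j
    using that
  proof (induction j rule: dec_induct)
    case base thus ?case by simp
  next
    case (step j)
    have "x \<in> Gs j" using Gs_mono[OF T step(1)] xk by blast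
    hence "psi_sharp Gs L \<psi> (Suc j) x = psi_sharp Gs L \<psi> j x" by (rule psi_agree[OF T M])
    thus ?case using step(3) by (rule trans)
  qed
  hence "psi_sharp Gs L \<psi> n x = psi_sharp Gs L \<psi> k x" using kn by blast
  moreover have "psi_EL_grp Gs L \<psi> x = psi_sharp Gs L \<psi> k x" unfolding psi_EL_grp_def k_def ..
  ultimately show ?thesis by simp
qed

lemma psi_EL_grp_inj:
  fixes L :: "'u::linordered_ab_group_add \<Rightarrow> ('u,'k::linordered_field) ser"
  assumes T: "EL_tower Gs L" and M: "morphism (Gs 0) L \<psi>"
  shows "inj_on (psi_EL_grp Gs L \<psi>) (\<Union>n. Gs n)"
proof (rule inj_onI)
  fix x y assume "x \<in> (\<Union>n. Gs n)" "y \<in> (\<Union>n. Gs n)" and e: "psi_EL_grp Gs L \<psi> x = psi_EL_grp Gs L \<psi> y"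
  then obtain a b where ab: "x \<in> Gs a" "y \<in> Gs b" by auto
  let ?m = "max a b"
  have xy: "x \<in> Gs ?m" "y \<in> Gs ?m" using Gs_mono[OF T] ab by (meson max.cobounded1 max.cobounded2 subsetD)+
  have "psi_sharp Gs L \<psi> ?m x = psi_sharp Gs L \<psi> ?m y" using e psi_EL_grp_eq[OF T M] xy by metis
  moreover have "inj_on (psi_sharp Gs L \<psi> ?m) (Gs ?m)"
    using psi_level[OF T M, of ?m] strict_mono_on_imp_inj_on by blast
  ultimately show "x = y" using xy unfolding inj_on_def by blast
qed

lemma psi_EL_inj:
  fixes L :: "'u::linordered_ab_group_add \<Rightarrow> ('u,'k::linordered_field) ser"
  assumes T: "EL_tower Gs L" and M: "morphism (Gs 0) L \<psi>"
  shows "inj_on (psi_EL Gs L \<psi>) (ELF Gs)"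
proof (rule inj_onI)
  fix a b :: "('u,'k) ser" assume ab: "a \<in> ELF Gs" "b \<in> ELF Gs" "psi_EL Gs L \<psi> a = psi_EL Gs L \<psi> b"
  let ?U = "\<Union>n. Gs n"
  have inj: "inj_on (psi_EL_grp Gs L \<psi>) ?U" by (rule psi_EL_grp_inj[OF T M])
  have sa: "supp a \<subseteq> ?U" "supp b \<subseteq> ?U" using ab(1,2) by (auto simp: ELF_def Ser_def)
  show "a = b"
  proof
    fix z show "a z = b z"
    proof (cases "z \<in> ?U")
      case True
      thus ?thesis using smap_inj_at[OF inj sa(1) True] smap_inj_at[OF inj sa(2) True] ab(3)
        unfolding psi_EL_def by metis
    next
      case False
      hence "z \<notin> supp a" "z \<notin> supp b" using sa by blast+
      thus ?thesis by (simp add: supp_def)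
    qed
  qed
qed



lemma supp_sscale_smon: "supp (sscale c (smon h) :: ('u,'k::linordered_field) ser) \<subseteq> {h}"
  by (auto simp: supp_def sscale_def smon_def)

lemma sscale_smon_Ser: assumes "h \<in> S"
  shows "(sscale c (smon h) :: ('u::linorder,'k::linordered_field) ser) \<in> Ser S"
proof -
  have "anti_wo (supp (sscale c (smon h) :: ('u,'k) ser))"
    by (rule anti_wo_subset[OF anti_wo_finite supp_sscale_smon]) simp
  thus ?thesis using supp_sscale_smon[of c h] assms unfolding Ser_def by auto
qed

theorem lemma9:
  fixes lg :: "'k::linordered_field \<Rightarrow> 'k"
    and Gs :: "nat \<Rightarrow> 'u::linordered_ab_group_add set"
    and L :: "'u \<Rightarrow> ('u,'k) ser"
    and \<psi> :: "'u \<Rightarrow> 'u"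
    and H :: "'u set"
  assumes log_k: "field_log lg"
    and tower: "EL_tower Gs L"
    and morph: "morphism (Gs 0) L \<psi>"
    and H_sub: "subgrp H" "H \<subseteq> Gs 0"
    and Comp_H: "\<forall>h\<in>H. (\<exists>g\<in>Gs 0. L h = smon g) \<longrightarrow> smon (\<psi> h) = L h"
  shows "\<forall>h\<in>H. (\<exists>g\<in>Gs 0. L h = smon g) \<longrightarrow> (\<forall>c::'k.
           psi_EL Gs L \<psi> (Exp lg Gs L (sscale c (smon h)))
             = Exp lg Gs L (sscale c (Log lg L (smon h)))
         \<and> (psi_EL Gs L \<psi> ` ELF Gs = ELF Gs \<longrightarrow>
             inv_into (ELF Gs) (psi_EL Gs L \<psi>) (Exp lg Gs L (sscale c (Log lg L (smon h))))
               \<in> {smul (smon h') (Exp lg Gs L \<beta>) | h' \<beta>. h' \<in> H \<and> \<beta> \<in> Ser (pos_part H)}))"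
proof (intro ballI impI allI conjI)
  fix h c assume hH: "h \<in> H" and hg: "\<exists>g\<in>Gs 0. L h = smon g"
  then obtain g where gG: "g \<in> Gs 0" and Lh: "L h = smon g" by blast
  have hG: "h \<in> Gs 0" using hH H_sub by blast
  have psih: "smon (\<psi> h) = L h" using Comp_H hH hg by blast
  have "L h \<in> Ser (pos_part (Gs 0))" using tower hG unfolding EL_tower_def by blast
  hence gpos: "g \<in> pos_part (Gs 0)" using Lh by (auto simp: Ser_def)
  have z0: "0 \<in> Gs 0" using Gs_sub[OF tower] unfolding subgrp_def by blast
  have hpos: "0 < h"
  proof (rule ccontr)
    assume "\<not> 0 < h"
    hence "h = 0 \<or> h < 0" by auto
    thus False
    proof
      assume "h = 0"
      hence "smon g = (\<lambda>_. 0 :: 'k)" using Lh L_zero[OF tower] by simp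
      hence "smon g g = (0::'k)" by metis
      thus False by simp
    next
      assume "h < 0"
      hence "sless (L h) (L 0)" using emb[OF tower, of 0] hG z0 unfolding ser_embedding_def by blast
      hence "spos (sdiff (\<lambda>_. 0) (smon g :: ('u,'k) ser))" using Lh L_zero[OF tower] by (simp add: sless_def)
      moreover have "sdiff (\<lambda>_. 0) (smon g :: ('u,'k) ser) = sscale (-1) (smon g)"
        by (rule ext) (simp add: sdiff_def sscale_def)
      moreover have "supp (sscale (-1) (smon g) :: ('u,'k) ser) = {g}" by (auto simp: supp_def sscale_def smon_def)
      moreover have "lead (sscale (-1) (smon g) :: ('u,'k) ser) = g"
        by (rule lead_eq) (auto simp: supp_def sscale_def smon_def)
      ultimately show False by (simp add: spos_def sscale_def)
    qed
  qed
  define t1 where "t1 = (sscale c (smon h) :: ('u,'k) ser)"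
  have t1S: "t1 \<in> Ser (pos_part (Gs 0))" unfolding t1_def using hG hpos
    by (intro sscale_smon_Ser) (simp add: pos_part_def)
  have t1H: "t1 \<in> Ser (pos_part H)" unfolding t1_def using hH hpos
    by (intro sscale_smon_Ser) (simp add: pos_part_def)
  have bij0: "bij_betw L (Gs (Suc 0)) (Ser (pos_part (Gs 0)))" using tower unfolding EL_tower_def by blast
  hence img0: "L ` Gs (Suc 0) = Ser (pos_part (Gs 0))" by (simp add: bij_betw_def)
  obtain x where x: "x \<in> Gs (Suc 0)" "L x = t1" using t1S img0 by (metis imageE)
  have E1: "Exp lg Gs L t1 = smon x" by (rule Exp_char[OF log_k tower x])
  define t2 where "t2 = sscale c (Log lg L (smon h))"
  have t2a: "t2 = sscale c (smon (\<psi> h))" unfolding t2_def Log_smon[OF log_k, of L h] psih ..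
  have t2b: "t2 = smap \<psi> t1" unfolding t2a t1_def smap_scale_smon ..
  have t2S: "t2 \<in> Ser (pos_part (Gs 0))" unfolding t2a psih Lh using gpos by (rule sscale_smon_Ser)
  define z where "z = psi_EL_grp Gs L \<psi> x"
  have zdef: "z = inv_into (Gs (Suc 0)) L t2"
    unfolding z_def psi_EL_grp_eq[OF tower morph x(1)] psi_sharp.simps x(2) t2b ..
  have t2i: "t2 \<in> L ` Gs (Suc 0)" using t2S img0 by simp
  have z: "z \<in> Gs (Suc 0)" "L z = t2" unfolding zdef
    using inv_into_into[OF t2i] f_inv_into_f[OF t2i] by auto
  have E2: "Exp lg Gs L t2 = smon z" by (rule Exp_char[OF log_k tower z])
  have P1: "psi_EL Gs L \<psi> (smon x) = smon z" unfolding psi_EL_def smap_smon z_def ..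
  show "psi_EL Gs L \<psi> (Exp lg Gs L (sscale c (smon h))) = Exp lg Gs L (sscale c (Log lg L (smon h)))"
    using P1 E1 E2 unfolding t1_def t2_def by simp
  show "inv_into (ELF Gs) (psi_EL Gs L \<psi>) (Exp lg Gs L (sscale c (Log lg L (smon h))))
        \<in> {smul (smon h') (Exp lg Gs L \<beta>) | h' \<beta>. h' \<in> H \<and> \<beta> \<in> Ser (pos_part H)}"
  proof -
    have xE: "(smon x :: ('u,'k) ser) \<in> ELF Gs" using smon_ELF[of x Gs "Suc 0", OF x(1)] .
    have "inv_into (ELF Gs) (psi_EL Gs L \<psi>) (Exp lg Gs L (sscale c (Log lg L (smon h)))) = smon x"
      using inv_into_f_f[OF psi_EL_inj[OF tower morph] xE] P1 E2 unfolding t2_def by simp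
    also have "\<dots> = smul (smon 0) (Exp lg Gs L t1)" unfolding E1 smul_smon_smon by simp
    finally show "inv_into (ELF Gs) (psi_EL Gs L \<psi>) (Exp lg Gs L (sscale c (Log lg L (smon h))))
        \<in> {smul (smon h') (Exp lg Gs L \<beta>) | h' \<beta>. h' \<in> H \<and> \<beta> \<in> Ser (pos_part H)}"
      using t1H H_sub(1) unfolding subgrp_def by blast
  qed
qed


end
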